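(* For $\mu\ge1$ define $$c^*(\mu)=\int_0^\infty \ln(z)\,G_\alpha\!\left(\frac{z}{\mu}\right)g_\alpha(z)\,dz+\int_0^\infty \ln(z)\,G_\alpha(\mu z)\,g_\alpha(z)\,dz .$$ Then $c^*$ is differentiable on $[1,\infty)$ with $$\frac{d}{d\mu}c^*(\mu)=-\frac{\Gamma(2\alpha)\,\mu^{\alpha-1}}{\Gamma(\alpha)^2(1+\mu)^{2\alpha}}\ln\mu\le 0,$$ and $\inf_{\mu\ge1}c^*(\mu)=\psi(\alpha)$, $\sup_{\mu\ge1}c^*(\mu)=c^*(1)=2\int_0^\infty\ln(z)G_\alpha(z)g_\alpha(z)\,dz$.
   Context: $\alpha>0$ is fixed. $G_\alpha$ and $g_\alpha$ denote the distribution function and density of the gamma distribution with shape $\alpha$ and scale $1$. $\psi=\Gamma'/\Gamma$ is the digamma function. *)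

theory Defs
  imports "HOL-Analysis.Analysis"
begin

definition gamma_density :: "real \<Rightarrow> real \<Rightarrow> real" where
  "gamma_density a x = (if x > 0 then x powr (a - 1) * exp (- x) / Gamma a else 0)"

definition gamma_CDF :: "real \<Rightarrow> real \<Rightarrow> real" where
  "gamma_CDF a x = (if x > 0 then (LINT t:{0..x}|lborel. gamma_density a t) else 0)"

definition cstar :: "real \<Rightarrow> real \<Rightarrow> real" where
  "cstar a \<mu> =
     (LINT z:{0<..}|lborel. ln z * gamma_CDF a (z / \<mu>) * gamma_density a z)
   + (LINT z:{0<..}|lborel. ln z * gamma_CDF a (\<mu> * z) * gamma_density a z)"

end

theory Submission
  imports Defs
begin


lemma gamma_int:
  assumes s: "s > (0::real)"
  shows "integrable lborel (\<lambda>t. indicator {0<..} t * (t powr (s - 1) * exp (- t)))"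
    "integral\<^sup>L lborel (\<lambda>t. indicator {0<..} t * (t powr (s - 1) * exp (- t))) = Gamma s"
proof -
  have eq: "(\<lambda>t. ennreal (indicator {0..} t * t powr (s - 1) / exp t)) =
      (\<lambda>t. ennreal (indicator {0<..} t * (t powr (s - 1) * exp (- t))))"
    by (rule ext) (auto simp: indicator_def exp_minus field_simps)
  have "(\<integral>\<^sup>+t. ennreal (indicator {0<..} t * (t powr (s - 1) * exp (- t))) \<partial>lborel) = ennreal (Gamma s)"
    using Gamma_conv_nn_integral_real[OF s] eq by simp
  then have "integrable lborel (\<lambda>t. indicator {0<..} t * (t powr (s - 1) * exp (- t))) \<and>
     integral\<^sup>L lborel (\<lambda>t. indicator {0<..} t * (t powr (s - 1) * exp (- t))) = Gamma s"
    using s by (subst (asm) nn_integral_eq_integrable) (auto simp: indicator_def less_imp_le)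
  then show "integrable lborel (\<lambda>t. indicator {0<..} t * (t powr (s - 1) * exp (- t)))"
    "integral\<^sup>L lborel (\<lambda>t. indicator {0<..} t * (t powr (s - 1) * exp (- t))) = Gamma s" by auto
qed

lemma ln_abs_bound:
  assumes z: "z > (0::real)" and b: "b > 0"
  shows "\<bar>ln z\<bar> \<le> (2 / b) * z powr (- b / 2) + z"
proof (cases "z \<le> 1")
  case True
  have "ln (z powr (- b / 2)) \<le> z powr (- b / 2) - 1"
    by (rule ln_le_minus_one) (use z in simp)
  then have "- (b/2) * ln z \<le> z powr (- b / 2)" using z by (simp add: ln_powr)
  then have "- ln z \<le> (2 / b) * z powr (- b / 2)" using b by (simp add: field_simps)
  moreover have "ln z \<le> 0" using True z by simp
  ultimately show ?thesis using z by simp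
next
  case False
  have "ln z \<le> z - 1" by (rule ln_le_minus_one) (use z in simp)
  moreover have "0 \<le> ln z" using False by simp
  moreover have "0 \<le> (2 / b) * z powr (- b / 2)" using b by simp
  ultimately show ?thesis by simp
qed

lemma ln_int:
  assumes b: "b > (0::real)"
  shows "integrable lborel (\<lambda>t. indicator {0<..} t * (ln t * t powr (b - 1) * exp (- t)))"
proof -
  have i: "integrable lborel (\<lambda>t. (2 / b) * (indicator {0<..} t * (t powr (b/2 - 1) * exp (- t)))
          + indicator {0<..} t * (t powr ((b + 1) - 1) * exp (- t)))"
    using gamma_int(1)[of "b/2"] gamma_int(1)[of "b+1"] b by auto
  have m: "(\<lambda>t. indicator {0<..} t * (ln t * t powr (b - 1) * exp (- t))) \<in> borel_measurable lborel"
    by measurable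
  have ae: "AE x in lborel. norm (indicator {0<..} x * (ln x * x powr (b - 1) * exp (- x)))
     \<le> norm ((2 / b) * (indicator {0<..} x * (x powr (b/2 - 1) * exp (- x)))
          + indicator {0<..} x * (x powr ((b + 1) - 1) * exp (- x)))"
  proof (rule AE_I2)
    fix x :: real
    show "norm (indicator {0<..} x * (ln x * x powr (b - 1) * exp (- x)))
     \<le> norm ((2 / b) * (indicator {0<..} x * (x powr (b/2 - 1) * exp (- x)))
          + indicator {0<..} x * (x powr ((b + 1) - 1) * exp (- x)))"
    proof (cases "x > 0")
      case True
      have "\<bar>ln x\<bar> * (x powr (b - 1) * exp (- x)) \<le> ((2 / b) * x powr (- b / 2) + x) * (x powr (b - 1) * exp (- x))"
        by (rule mult_right_mono[OF ln_abs_bound[OF True b]]) simp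
      also have "\<dots> = (2 / b) * (x powr (b/2 - 1) * exp (- x)) + x powr ((b + 1) - 1) * exp (- x)"
        using True by (simp add: algebra_simps powr_add[symmetric] powr_mult_base)
      finally show ?thesis using True b
        by (simp add: abs_mult)
    qed simp
  qed
  show ?thesis by (rule Bochner_Integration.integrable_bound[OF i m ae])
qed



lemma gd_nonneg: "a > 0 \<Longrightarrow> gamma_density a x \<ge> 0"
  by (simp add: gamma_density_def)

lemma gd_meas[measurable]: "gamma_density a \<in> borel_measurable borel"
  unfolding gamma_density_def by measurable

lemma gd_pos_eq: "x > 0 \<Longrightarrow> gamma_density a x = x powr (a - 1) * exp (- x) / Gamma a"
  by (simp add: gamma_density_def)

lemma gd_ind: "indicator {0<..} t * gamma_density a t = gamma_density a t"
  by (simp add: gamma_density_def indicator_def)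

lemma gd_int:
  assumes a: "a > 0"
  shows "integrable lborel (gamma_density a)" "integral\<^sup>L lborel (gamma_density a) = 1"
proof -
  have eq: "gamma_density a = (\<lambda>t. indicator {0<..} t * (t powr (a - 1) * exp (- t)) / Gamma a)"
    by (rule ext) (simp add: gamma_density_def indicator_def)
  show "integrable lborel (gamma_density a)" unfolding eq using gamma_int(1)[OF a] by simp
  have "Gamma a \<noteq> 0" using Gamma_real_pos[OF a] by simp
  then show "integral\<^sup>L lborel (gamma_density a) = 1" unfolding eq using gamma_int(2)[OF a] a
    by simp
qed

lemma gC_eq: "x > 0 \<Longrightarrow> gamma_CDF a x = integral\<^sup>L lborel (\<lambda>t. indicator {0..x} t * gamma_density a t)"
  by (simp add: gamma_CDF_def set_lebesgue_integral_def)

lemma gC_int: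
  assumes a: "a > 0" and A: "A \<in> sets borel"
  shows "integrable lborel (\<lambda>t. indicator A t * gamma_density a t)"
proof (rule Bochner_Integration.integrable_bound[OF gd_int(1)[OF a]])
  show "(\<lambda>t. indicator A t * gamma_density a t) \<in> borel_measurable lborel"
    using A by measurable
  show "AE x in lborel. norm (indicator A x * gamma_density a x) \<le> norm (gamma_density a x)"
    by (auto simp: indicator_def)
qed

lemma gC_le_int:
  assumes a: "a > 0" and xy: "x \<le> y"
  shows "integral\<^sup>L lborel (\<lambda>t. indicator {0..x} t * gamma_density a t)
       \<le> integral\<^sup>L lborel (\<lambda>t. indicator {0..y} t * gamma_density a t)"
  by (rule integral_mono[OF gC_int[OF a] gC_int[OF a]])
     (use xy gd_nonneg[OF a] in \<open>auto simp: indicator_def\<close>)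

lemma gC_nonneg: "a > 0 \<Longrightarrow> gamma_CDF a x \<ge> 0"
  by (auto simp: gamma_CDF_def set_lebesgue_integral_def gd_nonneg intro!: integral_nonneg_AE)

lemma gC_le1:
  assumes a: "a > 0" shows "gamma_CDF a x \<le> 1"
proof (cases "x > 0")
  case True
  have "gamma_CDF a x = integral\<^sup>L lborel (\<lambda>t. indicator {0..x} t * gamma_density a t)"
    using gC_eq[OF True] .
  also have "\<dots> \<le> integral\<^sup>L lborel (gamma_density a)"
    by (rule integral_mono[OF gC_int[OF a] gd_int(1)[OF a]])
       (use gd_nonneg[OF a] in \<open>auto simp: indicator_def\<close>)
  finally show ?thesis using gd_int(2)[OF a] by simp
qed (simp add: gamma_CDF_def)

lemma gC_mono: assumes a: "a > 0" shows "mono (gamma_CDF a)"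
proof (rule monoI)
  fix x y :: real assume xy: "x \<le> y"
  show "gamma_CDF a x \<le> gamma_CDF a y"
  proof (cases "x > 0")
    case True
    then show ?thesis using xy gC_le_int[OF a xy] by (simp add: gC_eq)
  next
    case False
    then show ?thesis using gC_nonneg[OF a, of y] by (simp add: gamma_CDF_def)
  qed
qed

lemma gC_meas[measurable]: "a > 0 \<Longrightarrow> gamma_CDF a \<in> borel_measurable borel"
  by (rule borel_measurable_mono[OF gC_mono])

lemma gd_cont: "0 < c \<Longrightarrow> a > 0 \<Longrightarrow> continuous_on {c..d} (gamma_density a)"
proof -
  assume c: "0 < c" and a: "a > 0"
  have gne: "Gamma a \<noteq> 0" using Gamma_real_pos[OF a] by simp
  have "continuous_on {c..d} (\<lambda>x. x powr (a - 1) * exp (- x) / Gamma a)"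
    using c gne by (intro continuous_intros) auto
  then show ?thesis
    by (rule continuous_on_eq) (use c in \<open>auto simp: gd_pos_eq\<close>)
qed

lemma gC_HK:
  assumes a: "a > 0" and y: "y > 0"
  shows "gamma_CDF a y = integral {0..y} (gamma_density a)"
proof -
  have si: "set_integrable lborel {0..y} (gamma_density a)"
    unfolding set_integrable_def using gC_int[OF a, of "{0..y}"] by simp
  show ?thesis using set_borel_integral_eq_integral(2)[OF si] y
    by (simp add: gamma_CDF_def)
qed

lemma gC_HK_int:
  assumes a: "a > 0"
  shows "gamma_density a integrable_on {0..y}"
proof -
  have si: "set_integrable lborel {0..y} (gamma_density a)"
    unfolding set_integrable_def using gC_int[OF a, of "{0..y}"] by simp
  show ?thesis using set_borel_integral_eq_integral(1)[OF si] .
qed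

lemma gC_deriv:
  assumes a: "a > 0" and x: "x > 0"
  shows "(gamma_CDF a has_real_derivative gamma_density a x) (at x)"
proof -
  let ?c = "x / 2"
  have "((\<lambda>y. integral {?c..y} (gamma_density a)) has_real_derivative gamma_density a x) (at x within {?c..2*x})"
    by (rule integral_has_real_derivative[OF gd_cont]) (use x a in auto)
  then have d: "((\<lambda>y. integral {?c..y} (gamma_density a)) has_real_derivative gamma_density a x) (at x)"
    using x by (simp add: at_within_Icc_at)
  have "((\<lambda>y. integral {0..?c} (gamma_density a) + integral {?c..y} (gamma_density a)) has_real_derivative gamma_density a x) (at x)"
    using d by (auto intro!: derivative_eq_intros)
  then show ?thesis
  proof (rule has_field_derivative_transform_within_open[where S="{?c<..}"])
    fix y assume y: "y \<in> {?c<..}"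
    have "integral {0..?c} (gamma_density a) + integral {?c..y} (gamma_density a) = integral {0..y} (gamma_density a)"
      using Henstock_Kurzweil_Integration.integral_combine[of 0 "x/2" y "gamma_density a"] x y gC_HK_int[OF a, of y] by auto
    also have "\<dots> = gamma_CDF a y" using gC_HK[OF a, of y] x y by simp
    finally show "integral {0..?c} (gamma_density a) + integral {?c..y} (gamma_density a) = gamma_CDF a y" .
  qed (use x in auto)
qed

lemma gC_top:
  assumes a: "a > 0"
  shows "(gamma_CDF a \<longlongrightarrow> 1) at_top"
proof -
  have lim: "((\<lambda>t. integral\<^sup>L lborel (\<lambda>u. indicator {0..t} u * gamma_density a u))
      \<longlongrightarrow> integral\<^sup>L lborel (gamma_density a)) at_top"
  proof (rule integral_dominated_convergence_at_top[where w="gamma_density a"])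
    show "gamma_density a \<in> borel_measurable lborel" by measurable
    show "(\<lambda>u. indicator {0..t} u * gamma_density a u) \<in> borel_measurable lborel" for t :: real
      by measurable
    show "integrable lborel (gamma_density a)" by (rule gd_int(1)[OF a])
    show "AE x in lborel. ((\<lambda>t. indicator {0..t} x * gamma_density a x) \<longlongrightarrow> gamma_density a x) at_top"
    proof (rule AE_I2)
      fix x :: real
      show "((\<lambda>t. indicator {0..t} x * gamma_density a x) \<longlongrightarrow> gamma_density a x) at_top"
      proof (cases "x \<ge> 0")
        case True
        have "eventually (\<lambda>t. indicator {0..t} x * gamma_density a x = gamma_density a x) at_top"
          using eventually_ge_at_top[of x] by eventually_elim (use True in auto)
        then show ?thesis by (rule tendsto_eventually)
      next
        case False
        then show ?thesis by (simp add: gamma_density_def)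
      qed
    qed
    show "\<forall>\<^sub>F i in at_top. AE x in lborel. norm (indicator {0..i} x * gamma_density a x) \<le> gamma_density a x"
      using gd_nonneg[OF a] by (auto simp: indicator_def)
  qed
  have "eventually (\<lambda>t. integral\<^sup>L lborel (\<lambda>u. indicator {0..t} u * gamma_density a u) = gamma_CDF a t) at_top"
    using eventually_gt_at_top[of 0] by eventually_elim (simp add: gC_eq)
  from tendsto_cong[OF this] lim show ?thesis using gd_int(2)[OF a] by simp
qed

lemma gC_zero:
  assumes a: "a > 0"
  shows "(gamma_CDF a \<longlongrightarrow> 0) (at_right 0)"
proof -
  have m1: "(\<lambda>u. 0::real) \<in> borel_measurable lborel" by measurable
  have m2: "(\<lambda>u. indicator {0..inverse t} u * gamma_density a u) \<in> borel_measurable lborel" for t :: real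
      by measurable
  have l: "AE x in lborel. ((\<lambda>t. indicator {0..inverse t} x * gamma_density a x) \<longlongrightarrow> 0) at_top"
    proof (rule AE_I2)
      fix x :: real
      show "((\<lambda>t. indicator {0..inverse t} x * gamma_density a x) \<longlongrightarrow> 0) at_top"
      proof (cases "x > 0")
        case True
        have "eventually (\<lambda>t. indicator {0..inverse t} x * gamma_density a x = 0) at_top"
          using eventually_gt_at_top[of "inverse x"]
        proof eventually_elim
          case (elim t)
          have "inverse t < inverse (inverse x)"
            by (rule less_imp_inverse_less) (use elim True in auto)
          then have "inverse t < x" by simp
          then show ?case by (simp add: indicator_def)
        qed
        then show ?thesis by (rule tendsto_eventually)
      next
        case False
        then show ?thesis by (simp add: gamma_density_def)
      qed
    qed
  have bd: "\<forall>\<^sub>F i in at_top. AE x in lborel. norm (indicator {0..inverse i} x * gamma_density a x) \<le> gamma_density a x"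
      using gd_nonneg[OF a] by (auto simp: indicator_def)
  note lim = integral_dominated_convergence_at_top[OF m1 m2 gd_int(1)[OF a] l bd]
  have "eventually (\<lambda>t. integral\<^sup>L lborel (\<lambda>u. indicator {0..inverse t} u * gamma_density a u) = gamma_CDF a (inverse t)) at_top"
    using eventually_gt_at_top[of 0] by eventually_elim (simp add: gC_eq)
  from tendsto_cong[OF this] lim have "((\<lambda>t. gamma_CDF a (inverse t)) \<longlongrightarrow> 0) at_top" by simp
  then show ?thesis by (simp add: filterlim_at_right_to_top)
qed




lemma quot_bound:
  fixes h h' :: "real \<Rightarrow> real"
  assumes y: "l < y" "y < r" and x0: "l < x0" "x0 < r" and ne: "y \<noteq> x0"
  and deriv: "\<And>x. l < x \<Longrightarrow> x < r \<Longrightarrow> (h has_real_derivative h' x) (at x)"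
  and bound: "\<And>x. l < x \<Longrightarrow> x < r \<Longrightarrow> \<bar>h' x\<bar> \<le> c"
  shows "\<bar>(h y - h x0) / (y - x0)\<bar> \<le> c"
proof (cases "y < x0")
  case True
  have der: "\<And>x. y \<le> x \<Longrightarrow> x \<le> x0 \<Longrightarrow> (h has_real_derivative h' x) (at x)"
    using deriv y x0 by simp
  from MVT2[OF True der] obtain \<xi> where xi: "y < \<xi>" "\<xi> < x0" "h x0 - h y = (x0 - y) * h' \<xi>"
    by blast
  have "(h y - h x0) / (y - x0) = h' \<xi>"
    using xi(3) True by (simp add: field_simps)
  moreover have "\<bar>h' \<xi>\<bar> \<le> c" using bound[of \<xi>] xi y x0 by simp
  ultimately show ?thesis by simp
next
  case False
  then have lt: "x0 < y" using ne by simp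
  have der: "\<And>x. x0 \<le> x \<Longrightarrow> x \<le> y \<Longrightarrow> (h has_real_derivative h' x) (at x)"
    using deriv y x0 by simp
  from MVT2[OF lt der] obtain \<xi> where xi: "x0 < \<xi>" "\<xi> < y" "h y - h x0 = (y - x0) * h' \<xi>"
    by blast
  have "(h y - h x0) / (y - x0) = h' \<xi>"
    using xi(3) lt by (simp add: field_simps)
  moreover have "\<bar>h' \<xi>\<bar> \<le> c" using bound[of \<xi>] xi y x0 by simp
  ultimately show ?thesis by simp
qed



lemma DUI:
  fixes f f' :: "real \<Rightarrow> real \<Rightarrow> real" and B :: "real \<Rightarrow> real"
  assumes x0: "l < x0" "x0 < r"
  and deriv: "\<And>x z. l < x \<Longrightarrow> x < r \<Longrightarrow> ((\<lambda>x. f x z) has_real_derivative f' x z) (at x)"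
  and int: "\<And>x. l < x \<Longrightarrow> x < r \<Longrightarrow> integrable lborel (f x)"
  and meas: "f' x0 \<in> borel_measurable lborel"
  and Bint: "integrable lborel B"
  and bound: "\<And>x z. l < x \<Longrightarrow> x < r \<Longrightarrow> \<bar>f' x z\<bar> \<le> B z"
  shows "((\<lambda>x. integral\<^sup>L lborel (f x)) has_real_derivative integral\<^sup>L lborel (f' x0)) (at x0)"
proof -
  let ?S = "{l<..<r}"
  have atS: "at x0 within ?S = at x0" using x0 by (intro at_within_open) auto
  have "((\<lambda>y. (integral\<^sup>L lborel (f y) - integral\<^sup>L lborel (f x0)) / (y - x0))
          \<longlongrightarrow> integral\<^sup>L lborel (f' x0)) (at x0 within ?S)"
  proof (subst tendsto_at_iff_sequentially, intro allI impI)
    fix X :: "nat \<Rightarrow> real"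
    assume XS: "\<forall>i. X i \<in> ?S - {x0}" and Xl: "X \<longlonglongrightarrow> x0"
    let ?s = "\<lambda>i z. (f (X i) z - f x0 z) / (X i - x0)"
    have eq: "(integral\<^sup>L lborel (f (X i)) - integral\<^sup>L lborel (f x0)) / (X i - x0)
        = integral\<^sup>L lborel (?s i)" for i
    proof -
      have "integrable lborel (f (X i))" using int XS by auto
      moreover have "integrable lborel (f x0)" using int x0 by auto
      ultimately show ?thesis by simp
    qed
    have "(\<lambda>i. integral\<^sup>L lborel (?s i)) \<longlonglongrightarrow> integral\<^sup>L lborel (f' x0)"
    proof (rule integral_dominated_convergence[where w=B])
      show "f' x0 \<in> borel_measurable lborel" by (rule meas)
      show "?s i \<in> borel_measurable lborel" for i
      proof -
        have "f (X i) \<in> borel_measurable lborel" using int XS by (auto intro: borel_measurable_integrable)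
        moreover have "f x0 \<in> borel_measurable lborel" using int x0 by (auto intro: borel_measurable_integrable)
        ultimately show ?thesis by measurable
      qed
      show "integrable lborel B" by (rule Bint)
      show "AE z in lborel. (\<lambda>i. ?s i z) \<longlonglongrightarrow> f' x0 z"
      proof (rule AE_I2)
        fix z
        have "((\<lambda>y. (f y z - f x0 z) / (y - x0)) \<longlongrightarrow> f' x0 z) (at x0)"
          using deriv[OF x0, of z] by (simp add: has_field_derivative_iff)
        moreover have "filterlim X (at x0) sequentially"
          using XS Xl by (auto simp: filterlim_at)
        ultimately show "(\<lambda>i. ?s i z) \<longlonglongrightarrow> f' x0 z"
          by (rule filterlim_compose[where f=X])
      qed
      show "AE z in lborel. norm (?s i z) \<le> B z" for i
      proof (rule AE_I2)
        fix z
        show "norm (?s i z) \<le> B z"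
          using quot_bound[of l "X i" r x0 "\<lambda>x. f x z" "\<lambda>x. f' x z" "B z"] XS x0 deriv bound
          by auto
      qed
    qed
    then show "((\<lambda>y. (integral\<^sup>L lborel (f y) - integral\<^sup>L lborel (f x0)) / (y - x0)) \<circ> X)
        \<longlonglongrightarrow> integral\<^sup>L lborel (f' x0)"
      by (simp add: o_def eq)
  qed
  then show ?thesis unfolding atS has_field_derivative_iff by simp
qed




definition "F1 a \<mu> z = indicator {0<..} z * (ln z * gamma_CDF a (z / \<mu>) * gamma_density a z)"
definition "F2 a \<mu> z = indicator {0<..} z * (ln z * gamma_CDF a (\<mu> * z) * gamma_density a z)"
definition "F1' a \<mu> z = indicator {0<..} z * (ln z * (gamma_density a (z / \<mu>) * (- z / \<mu>\<^sup>2)) * gamma_density a z)"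
definition "F2' a \<mu> z = indicator {0<..} z * (ln z * (gamma_density a (\<mu> * z) * z) * gamma_density a z)"

lemma cstar_eq: "cstar a \<mu> = integral\<^sup>L lborel (F1 a \<mu>) + integral\<^sup>L lborel (F2 a \<mu>)"
  by (simp add: cstar_def set_lebesgue_integral_def F1_def[abs_def] F2_def[abs_def])

lemma F1_deriv:
  assumes a: "a > 0" and mu: "\<mu> > 0"
  shows "((\<lambda>\<mu>. F1 a \<mu> z) has_real_derivative F1' a \<mu> z) (at \<mu>)"
proof (cases "z > 0")
  case True
  have "((\<lambda>\<mu>. gamma_CDF a (z / \<mu>)) has_real_derivative gamma_density a (z / \<mu>) * (- z / \<mu>\<^sup>2)) (at \<mu>)"
  proof (rule DERIV_chain2[OF gC_deriv[OF a]])
    show "0 < z / \<mu>" using True mu by simp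
    show "((\<lambda>\<mu>. z / \<mu>) has_real_derivative - z / \<mu>\<^sup>2) (at \<mu>)"
      using mu by (auto intro!: derivative_eq_intros simp: power2_eq_square)
  qed
  then have "((\<lambda>\<mu>. indicator {0<..} z * (ln z * gamma_CDF a (z / \<mu>) * gamma_density a z)) has_real_derivative
      indicator {0<..} z * (ln z * (gamma_density a (z / \<mu>) * (- z / \<mu>\<^sup>2)) * gamma_density a z)) (at \<mu>)"
    by (auto intro!: derivative_eq_intros)
  then show ?thesis unfolding F1_def[abs_def] F1'_def by simp
next
  case False
  then show ?thesis unfolding F1_def[abs_def] F1'_def by simp
qed

lemma F2_deriv:
  assumes a: "a > 0" and mu: "\<mu> > 0"
  shows "((\<lambda>\<mu>. F2 a \<mu> z) has_real_derivative F2' a \<mu> z) (at \<mu>)"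
proof (cases "z > 0")
  case True
  have "((\<lambda>\<mu>. gamma_CDF a (\<mu> * z)) has_real_derivative gamma_density a (\<mu> * z) * z) (at \<mu>)"
  proof (rule DERIV_chain2[OF gC_deriv[OF a]])
    show "0 < \<mu> * z" using True mu by simp
    show "((\<lambda>\<mu>. \<mu> * z) has_real_derivative z) (at \<mu>)"
      by (auto intro!: derivative_eq_intros)
  qed
  then have "((\<lambda>\<mu>. indicator {0<..} z * (ln z * gamma_CDF a (\<mu> * z) * gamma_density a z)) has_real_derivative
      indicator {0<..} z * (ln z * (gamma_density a (\<mu> * z) * z) * gamma_density a z)) (at \<mu>)"
    by (auto intro!: derivative_eq_intros)
  then show ?thesis unfolding F2_def[abs_def] F2'_def by simp
next
  case False
  then show ?thesis unfolding F2_def[abs_def] F2'_def by simp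
qed

lemma F_meas:
  assumes a: "a > 0"
  shows "F1 a \<mu> \<in> borel_measurable lborel" "F2 a \<mu> \<in> borel_measurable lborel"
    "F1' a \<mu> \<in> borel_measurable lborel" "F2' a \<mu> \<in> borel_measurable lborel"
  using gC_meas[OF a] unfolding F1_def[abs_def] F2_def[abs_def] F1'_def[abs_def] F2'_def[abs_def]
  by measurable

lemma F_int:
  assumes a: "a > 0"
  shows "integrable lborel (F1 a \<mu>)" "integrable lborel (F2 a \<mu>)"
proof -
  let ?w = "\<lambda>z. indicator {0<..} z * (ln z * z powr (a - 1) * exp (- z)) / Gamma a"
  have wi: "integrable lborel ?w" using ln_int[OF a] by simp
  have gp: "Gamma a > 0" using a by simp
  have *: "\<bar>indicator {0<..} z * (ln z * gamma_CDF a x * gamma_density a z)\<bar> \<le> \<bar>?w z\<bar>" for z x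
  proof (cases "z > 0")
    case True
    have "\<bar>ln z * gamma_CDF a x * gamma_density a z\<bar> = \<bar>ln z\<bar> * gamma_CDF a x * gamma_density a z"
      using gC_nonneg[OF a] gd_nonneg[OF a] by (simp add: abs_mult)
    also have "\<dots> \<le> \<bar>ln z\<bar> * 1 * gamma_density a z"
      using gC_le1[OF a] gd_nonneg[OF a] by (intro mult_right_mono mult_left_mono) auto
    also have "\<dots> = \<bar>?w z\<bar>" using True gp by (simp add: gd_pos_eq abs_mult)
    finally show ?thesis using True by simp
  qed simp
  show "integrable lborel (F1 a \<mu>)"
    by (rule Bochner_Integration.integrable_bound[OF wi F_meas(1)[OF a]])
       (use * in \<open>auto simp: F1_def\<close>)
  show "integrable lborel (F2 a \<mu>)"
    by (rule Bochner_Integration.integrable_bound[OF wi F_meas(2)[OF a]])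
       (use * in \<open>auto simp: F2_def\<close>)
qed



lemma exp2ln: assumes mu: "\<mu> > (0::real)" shows  "exp (2 * ln \<mu>) = \<mu>\<^sup>2"
proof -
  have "ln (\<mu>\<^sup>2) = 2 * ln \<mu>" using mu by (simp add: ln_realpow)
  then show ?thesis using mu by (metis exp_ln zero_less_power)
qed

lemma E1:
  assumes z: "z > (0::real)" and mu: "\<mu> > 0"
  shows "(z / \<mu>) powr (a - 1) * (z / \<mu>\<^sup>2) * z powr (a - 1) = z powr (2 * a - 1) * \<mu> powr (- 1 - a)"
proof -
  have e2: "exp (2 * ln \<mu>) = \<mu>\<^sup>2" using exp2ln[OF mu] .
  have p1: "(z / \<mu>) powr (a - 1) = exp ((a - 1) * (ln z - ln \<mu>))"
    using z mu by (simp add: powr_def ln_div)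
  have p2: "z / \<mu>\<^sup>2 = exp (ln z - 2 * ln \<mu>)"
    using z mu by (simp add: exp_diff e2)
  have p3: "z powr (a - 1) = exp ((a - 1) * ln z)" using z by (simp add: powr_def)
  have "(z / \<mu>) powr (a - 1) * (z / \<mu>\<^sup>2) * z powr (a - 1) =
      exp ((a - 1) * (ln z - ln \<mu>)) * exp (ln z - 2 * ln \<mu>) * exp ((a - 1) * ln z)"
    by (simp only: p1 p2 p3)
  also have "\<dots> = exp ((2 * a - 1) * ln z + (- 1 - a) * ln \<mu>)"
    by (simp add: exp_add[symmetric] algebra_simps)
  also have "\<dots> = z powr (2 * a - 1) * \<mu> powr (- 1 - a)"
    using z mu by (simp add: powr_def exp_add)
  finally show ?thesis .
qed

lemma E2:
  assumes z: "z > (0::real)" and mu: "\<mu> > 0"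
  shows "(\<mu> * z) powr (a - 1) * z * z powr (a - 1) = z powr (2 * a - 1) * \<mu> powr (a - 1)"
proof -
  have p1: "(\<mu> * z) powr (a - 1) = exp ((a - 1) * (ln \<mu> + ln z))"
    using z mu by (simp add: powr_def ln_mult)
  have p3: "z powr (a - 1) = exp ((a - 1) * ln z)" using z by (simp add: powr_def)
  have "(\<mu> * z) powr (a - 1) * z * z powr (a - 1) =
      exp ((a - 1) * (ln \<mu> + ln z)) * exp (ln z) * exp ((a - 1) * ln z)"
    using z by (simp only: p1 p3 exp_ln)
  also have "\<dots> = exp ((2 * a - 1) * ln z + (a - 1) * ln \<mu>)"
    by (simp add: exp_add[symmetric] algebra_simps)
  also have "\<dots> = z powr (2 * a - 1) * \<mu> powr (a - 1)"
    using z mu by (simp add: powr_def exp_add)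
  finally show ?thesis .
qed

definition "Kb a l r = (l powr (- 1 - a) + l powr (a - 1) + r powr (a - 1)) / (Gamma a)\<^sup>2"

lemma powr_range:
  fixes a l r \<mu> :: real
  assumes a: "a > 0" and l: "l > 0" "l < \<mu>" "\<mu> < r"
  shows "\<mu> powr (- 1 - a) \<le> l powr (- 1 - a) + l powr (a - 1) + r powr (a - 1)"
    "\<mu> powr (a - 1) \<le> l powr (- 1 - a) + l powr (a - 1) + r powr (a - 1)"
proof -
  have n: "0 \<le> l powr (a - 1)" "0 \<le> r powr (a - 1)" "0 \<le> l powr (- 1 - a)"
    by (rule powr_ge_zero)+
  have "\<mu> powr (- 1 - a) \<le> l powr (- 1 - a)"
    by (rule powr_mono2') (use l a in auto)
  then show "\<mu> powr (- 1 - a) \<le> l powr (- 1 - a) + l powr (a - 1) + r powr (a - 1)" using n by linarith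
  show "\<mu> powr (a - 1) \<le> l powr (- 1 - a) + l powr (a - 1) + r powr (a - 1)"
  proof (cases "a \<ge> 1")
    case True
    have "\<mu> powr (a - 1) \<le> r powr (a - 1)"
      by (rule powr_mono2) (use l True in auto)
    then show ?thesis using n by linarith
  next
    case False
    have "\<mu> powr (a - 1) \<le> l powr (a - 1)"
      by (rule powr_mono2') (use l False in auto)
    then show ?thesis using n by linarith
  qed
qed

lemma F1'_bound:
  assumes a: "a > 0" and l: "l > 0" "l < \<mu>" "\<mu> < r"
  shows "\<bar>F1' a \<mu> z\<bar> \<le> Kb a l r * \<bar>indicator {0<..} z * (ln z * z powr (2 * a - 1) * exp (- z))\<bar>"
proof (cases "z > 0")
  case True
  have mu: "\<mu> > 0" using l by simp
  have gp: "Gamma a > 0" using a by simp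
  have g1: "gamma_density a (z / \<mu>) \<le> (z / \<mu>) powr (a - 1) / Gamma a"
  proof -
    have "exp (- (z / \<mu>)) \<le> 1" using True mu by simp
    then have "(z / \<mu>) powr (a - 1) * exp (- (z / \<mu>)) \<le> (z / \<mu>) powr (a - 1) * 1"
      by (intro mult_left_mono) auto
    then show ?thesis using True mu gp by (simp add: gd_pos_eq divide_right_mono)
  qed
  have "\<bar>F1' a \<mu> z\<bar> = \<bar>ln z\<bar> * (gamma_density a (z / \<mu>) * (z / \<mu>\<^sup>2)) * gamma_density a z"
    using True mu gd_nonneg[OF a] by (simp add: F1'_def abs_mult)
  also have "\<dots> \<le> \<bar>ln z\<bar> * ((z / \<mu>) powr (a - 1) / Gamma a * (z / \<mu>\<^sup>2)) * gamma_density a z"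
    using g1 True mu gd_nonneg[OF a] by (intro mult_right_mono mult_left_mono) auto
  also have "\<dots> = (\<bar>ln z\<bar> * exp (- z) / (Gamma a)\<^sup>2) * ((z / \<mu>) powr (a - 1) * (z / \<mu>\<^sup>2) * z powr (a - 1))"
    using True mu gp by (simp add: gd_pos_eq power2_eq_square field_simps)
  also have "\<dots> = (\<bar>ln z\<bar> * exp (- z) / (Gamma a)\<^sup>2) * (z powr (2 * a - 1) * \<mu> powr (- 1 - a))"
    by (simp only: E1[OF True mu])
  also have "\<dots> = \<bar>ln z\<bar> * z powr (2 * a - 1) * exp (- z) * (\<mu> powr (- 1 - a) / (Gamma a)\<^sup>2)"
    by (simp add: field_simps)
  also have "\<dots> \<le> \<bar>ln z\<bar> * z powr (2 * a - 1) * exp (- z) * Kb a l r"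
    unfolding Kb_def using powr_range(1)[OF a l] gp
    by (intro mult_left_mono divide_right_mono) auto
  finally show ?thesis using True by (simp add: abs_mult mult_ac)
qed (simp add: F1'_def)

lemma F2'_bound:
  assumes a: "a > 0" and l: "l > 0" "l < \<mu>" "\<mu> < r"
  shows "\<bar>F2' a \<mu> z\<bar> \<le> Kb a l r * \<bar>indicator {0<..} z * (ln z * z powr (2 * a - 1) * exp (- z))\<bar>"
proof (cases "z > 0")
  case True
  have mu: "\<mu> > 0" using l by simp
  have gp: "Gamma a > 0" using a by simp
  have g1: "gamma_density a (\<mu> * z) \<le> (\<mu> * z) powr (a - 1) / Gamma a"
  proof -
    have "exp (- (\<mu> * z)) \<le> 1" using True mu by simp
    then have "(\<mu> * z) powr (a - 1) * exp (- (\<mu> * z)) \<le> (\<mu> * z) powr (a - 1) * 1"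
      by (intro mult_left_mono) auto
    then show ?thesis using True mu gp by (simp add: gd_pos_eq divide_right_mono)
  qed
  have "\<bar>F2' a \<mu> z\<bar> = \<bar>ln z\<bar> * (gamma_density a (\<mu> * z) * z) * gamma_density a z"
    using True mu gd_nonneg[OF a] by (simp add: F2'_def abs_mult)
  also have "\<dots> \<le> \<bar>ln z\<bar> * ((\<mu> * z) powr (a - 1) / Gamma a * z) * gamma_density a z"
    using g1 True mu gd_nonneg[OF a] by (intro mult_right_mono mult_left_mono) auto
  also have "\<dots> = (\<bar>ln z\<bar> * exp (- z) / (Gamma a)\<^sup>2) * ((\<mu> * z) powr (a - 1) * z * z powr (a - 1))"
    using True mu gp by (simp add: gd_pos_eq power2_eq_square field_simps)
  also have "\<dots> = (\<bar>ln z\<bar> * exp (- z) / (Gamma a)\<^sup>2) * (z powr (2 * a - 1) * \<mu> powr (a - 1))"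
    by (simp only: E2[OF True mu])
  also have "\<dots> = \<bar>ln z\<bar> * z powr (2 * a - 1) * exp (- z) * (\<mu> powr (a - 1) / (Gamma a)\<^sup>2)"
    by (simp add: field_simps)
  also have "\<dots> \<le> \<bar>ln z\<bar> * z powr (2 * a - 1) * exp (- z) * Kb a l r"
    unfolding Kb_def using powr_range(2)[OF a l] gp
    by (intro mult_left_mono divide_right_mono) auto
  finally show ?thesis using True by (simp add: abs_mult mult_ac)
qed (simp add: F2'_def)




lemma gamma_int_scaled:
  assumes s: "s > (0::real)" and c: "c > 0"
  shows "integrable lborel (\<lambda>w. indicator {0<..} w * (w powr (s - 1) * exp (- (c * w))))"
    "integral\<^sup>L lborel (\<lambda>w. indicator {0<..} w * (w powr (s - 1) * exp (- (c * w)))) = Gamma s / c powr s"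
proof -
  let ?f = "\<lambda>t. indicator {0<..} t * (t powr (s - 1) * exp (- t))"
  have eq: "?f (c * w) = c powr (s - 1) * (indicator {0<..} w * (w powr (s - 1) * exp (- (c * w))))" for w
    using c by (cases "w > 0") (auto simp: indicator_def powr_mult zero_less_mult_iff)
  have "integrable lborel (\<lambda>w. ?f (0 + c * w))"
    using lborel_integrable_real_affine[OF gamma_int(1)[OF s], of c 0] c by simp
  then have "integrable lborel (\<lambda>w. (1 / c powr (s - 1)) * ?f (0 + c * w))" by simp
  moreover have "(\<lambda>w. (1 / c powr (s - 1)) * ?f (0 + c * w)) = (\<lambda>w. indicator {0<..} w * (w powr (s - 1) * exp (- (c * w))))"
    using c by (intro ext) ((simp only: add_0 eq), simp)
  ultimately show "integrable lborel (\<lambda>w. indicator {0<..} w * (w powr (s - 1) * exp (- (c * w))))" by simp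
  have "Gamma s = c * integral\<^sup>L lborel (\<lambda>w. ?f (0 + c * w))"
    using lborel_integral_real_affine[of c ?f 0] gamma_int(2)[OF s] c by simp
  also have "\<dots> = c * c powr (s - 1) * integral\<^sup>L lborel (\<lambda>w. indicator {0<..} w * (w powr (s - 1) * exp (- (c * w))))"
    by (simp only: add_0 eq integral_mult_right_zero mult.assoc)
  also have "c * c powr (s - 1) = c powr s" using c by (simp add: powr_diff)
  finally show "integral\<^sup>L lborel (\<lambda>w. indicator {0<..} w * (w powr (s - 1) * exp (- (c * w)))) = Gamma s / c powr s"
    using c by (simp add: field_simps)
qed

definition "Q a \<mu> w = indicator {0<..} w * (w * gamma_density a w * gamma_density a (\<mu> * w))"

lemma Q_eq:
  assumes a: "a > 0" and mu: "\<mu> > 0"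
  shows "Q a \<mu> w = \<mu> powr (a - 1) / (Gamma a)\<^sup>2 * (indicator {0<..} w * (w powr (2 * a - 1) * exp (- ((1 + \<mu>) * w))))"
proof (cases "w > 0")
  case True
  have "Q a \<mu> w = (\<mu> * w) powr (a - 1) * w * w powr (a - 1) * (exp (- w) * exp (- (\<mu> * w))) / (Gamma a)\<^sup>2"
    using True mu by (simp add: Q_def gd_pos_eq power2_eq_square field_simps)
  also have "\<dots> = w powr (2 * a - 1) * \<mu> powr (a - 1) * exp (- ((1 + \<mu>) * w)) / (Gamma a)\<^sup>2"
    by (simp only: E2[OF True mu]) (simp add: exp_add[symmetric] algebra_simps)
  finally show ?thesis using True by simp
qed (simp add: Q_def)

lemma Q_int:
  assumes a: "a > 0" and mu: "\<mu> > 0"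
  shows "integrable lborel (Q a \<mu>)"
    "integral\<^sup>L lborel (Q a \<mu>) = \<mu> powr (a - 1) * Gamma (2 * a) / ((Gamma a)\<^sup>2 * (1 + \<mu>) powr (2 * a))"
proof -
  have e: "Q a \<mu> = (\<lambda>w. \<mu> powr (a - 1) / (Gamma a)\<^sup>2 * (indicator {0<..} w * (w powr (2 * a - 1) * exp (- ((1 + \<mu>) * w)))))"
    using Q_eq[OF a mu] by auto
  show "integrable lborel (Q a \<mu>)" unfolding e
    using gamma_int_scaled(1)[of "2 * a" "1 + \<mu>"] a mu by simp
  show "integral\<^sup>L lborel (Q a \<mu>) = \<mu> powr (a - 1) * Gamma (2 * a) / ((Gamma a)\<^sup>2 * (1 + \<mu>) powr (2 * a))"
    unfolding e using gamma_int_scaled(2)[of "2 * a" "1 + \<mu>"] a mu by simp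
qed

lemma lnQ_int:
  assumes a: "a > 0" and mu: "\<mu> > 0"
  shows "integrable lborel (\<lambda>w. ln w * Q a \<mu> w)"
proof (rule Bochner_Integration.integrable_bound)
  show "integrable lborel (\<lambda>w. \<mu> powr (a - 1) / (Gamma a)\<^sup>2 * \<bar>indicator {0<..} w * (ln w * w powr (2 * a - 1) * exp (- w))\<bar>)"
    using ln_int[of "2 * a"] a by (intro integrable_mult_right integrable_abs) simp
  show "(\<lambda>w. ln w * Q a \<mu> w) \<in> borel_measurable lborel"
    unfolding Q_def by measurable
  show "AE w in lborel. norm (ln w * Q a \<mu> w) \<le> norm (\<mu> powr (a - 1) / (Gamma a)\<^sup>2 * \<bar>indicator {0<..} w * (ln w * w powr (2 * a - 1) * exp (- w))\<bar>)"
  proof (rule AE_I2)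
    fix w :: real
    show "norm (ln w * Q a \<mu> w) \<le> norm (\<mu> powr (a - 1) / (Gamma a)\<^sup>2 * \<bar>indicator {0<..} w * (ln w * w powr (2 * a - 1) * exp (- w))\<bar>)"
    proof (cases "w > 0")
      case True
      have "- ((1 + \<mu>) * w) \<le> - w" using True mu by (simp add: distrib_right)
      then have "exp (- ((1 + \<mu>) * w)) \<le> exp (- w)" by (simp only: exp_le_cancel_iff)
      then have "\<bar>ln w\<bar> * (w powr (2 * a - 1) * exp (- ((1 + \<mu>) * w))) \<le> \<bar>ln w\<bar> * (w powr (2 * a - 1) * exp (- w))"
        by (intro mult_left_mono) auto
      then have "\<mu> powr (a - 1) / (Gamma a)\<^sup>2 * (\<bar>ln w\<bar> * (w powr (2 * a - 1) * exp (- ((1 + \<mu>) * w))))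
          \<le> \<mu> powr (a - 1) / (Gamma a)\<^sup>2 * (\<bar>ln w\<bar> * (w powr (2 * a - 1) * exp (- w)))"
        by (rule mult_left_mono) simp
      then show ?thesis using True by (simp add: Q_eq[OF a mu] abs_mult ac_simps)
    qed (simp add: Q_def)
  qed
qed

lemma intF2':
  assumes a: "a > 0"
  shows "integral\<^sup>L lborel (F2' a \<mu>) = integral\<^sup>L lborel (\<lambda>w. ln w * Q a \<mu> w)"
  by (rule arg_cong[where f="integral\<^sup>L lborel"]) (auto simp: F2'_def Q_def mult_ac)

lemma intF1':
  assumes a: "a > 0" and mu: "\<mu> > 0"
  shows "integral\<^sup>L lborel (F1' a \<mu>) = - integral\<^sup>L lborel (\<lambda>w. (ln \<mu> + ln w) * Q a \<mu> w)"
proof -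
  have "integral\<^sup>L lborel (F1' a \<mu>) = \<mu> * integral\<^sup>L lborel (\<lambda>w. F1' a \<mu> (0 + \<mu> * w))"
    using lborel_integral_real_affine[of \<mu> "F1' a \<mu>" 0] mu by simp
  also have "\<dots> = integral\<^sup>L lborel (\<lambda>w. \<mu> * F1' a \<mu> (0 + \<mu> * w))" by simp
  also have "(\<lambda>w. \<mu> * F1' a \<mu> (0 + \<mu> * w)) = (\<lambda>w. - ((ln \<mu> + ln w) * Q a \<mu> w))"
  proof
    fix w
    show "\<mu> * F1' a \<mu> (0 + \<mu> * w) = - ((ln \<mu> + ln w) * Q a \<mu> w)"
    proof (cases "w > 0")
      case True
      then show ?thesis using mu
        by (simp add: F1'_def Q_def ln_mult power2_eq_square field_simps)
    next
      case False
      then show ?thesis using mu by (simp add: F1'_def Q_def zero_less_mult_iff)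
    qed
  qed
  finally show ?thesis by simp
qed

lemma sumF':
  assumes a: "a > 0" and mu: "\<mu> > 0"
  shows "integral\<^sup>L lborel (F1' a \<mu>) + integral\<^sup>L lborel (F2' a \<mu>) =
    - (Gamma (2 * a) * \<mu> powr (a - 1)) / (Gamma a ^ 2 * (1 + \<mu>) powr (2 * a)) * ln \<mu>"
proof -
  have i1: "integrable lborel (\<lambda>w. ln \<mu> * Q a \<mu> w)" using Q_int(1)[OF a mu] by simp
  have "integral\<^sup>L lborel (\<lambda>w. (ln \<mu> + ln w) * Q a \<mu> w) =
      integral\<^sup>L lborel (\<lambda>w. ln \<mu> * Q a \<mu> w + ln w * Q a \<mu> w)"
    by (simp add: distrib_right)
  also have "\<dots> = ln \<mu> * integral\<^sup>L lborel (Q a \<mu>) + integral\<^sup>L lborel (\<lambda>w. ln w * Q a \<mu> w)"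
    using i1 lnQ_int[OF a mu] by simp
  finally have "integral\<^sup>L lborel (F1' a \<mu>) + integral\<^sup>L lborel (F2' a \<mu>) = - (ln \<mu> * integral\<^sup>L lborel (Q a \<mu>))"
    using intF1'[OF a mu] intF2'[OF a, of \<mu>] by simp
  then show ?thesis using Q_int(2)[OF a mu] by (simp add: field_simps)
qed




lemma cstar_deriv:
  assumes a: "a > 0" and mu0: "\<mu>0 > 0"
  shows "(cstar a has_real_derivative
     - (Gamma (2 * a) * \<mu>0 powr (a - 1)) / (Gamma a ^ 2 * (1 + \<mu>0) powr (2 * a)) * ln \<mu>0) (at \<mu>0)"
proof -
  define l where "l = \<mu>0 / 2"
  define r where "r = 2 * \<mu>0"
  have lr: "l > 0" "l < \<mu>0" "\<mu>0 < r" using mu0 by (auto simp: l_def r_def)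
  define B where "B = (\<lambda>z. Kb a l r * \<bar>indicator {0<..} z * (ln z * z powr (2 * a - 1) * exp (- z))\<bar>)"
  have Bint: "integrable lborel B" unfolding B_def
    using ln_int[of "2 * a"] a by (intro integrable_mult_right integrable_abs) simp
  have d1: "((\<lambda>\<mu>. integral\<^sup>L lborel (F1 a \<mu>)) has_real_derivative integral\<^sup>L lborel (F1' a \<mu>0)) (at \<mu>0)"
  proof (rule DUI[OF lr(2,3) _ _ _ Bint])
    show "((\<lambda>x. F1 a x z) has_real_derivative F1' a x z) (at x)" if "l < x" "x < r" for x z
      using F1_deriv[OF a, of x z] that lr by simp
    show "integrable lborel (F1 a x)" for x using F_int(1)[OF a] .
    show "F1' a \<mu>0 \<in> borel_measurable lborel" using F_meas(3)[OF a] .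
    show "\<bar>F1' a x z\<bar> \<le> B z" if "l < x" "x < r" for x z
      unfolding B_def using F1'_bound[OF a lr(1) that] .
  qed
  have d2: "((\<lambda>\<mu>. integral\<^sup>L lborel (F2 a \<mu>)) has_real_derivative integral\<^sup>L lborel (F2' a \<mu>0)) (at \<mu>0)"
  proof (rule DUI[OF lr(2,3) _ _ _ Bint])
    show "((\<lambda>x. F2 a x z) has_real_derivative F2' a x z) (at x)" if "l < x" "x < r" for x z
      using F2_deriv[OF a, of x z] that lr by simp
    show "integrable lborel (F2 a x)" for x using F_int(2)[OF a] .
    show "F2' a \<mu>0 \<in> borel_measurable lborel" using F_meas(4)[OF a] .
    show "\<bar>F2' a x z\<bar> \<le> B z" if "l < x" "x < r" for x z
      unfolding B_def using F2'_bound[OF a lr(1) that] .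
  qed
  have "((\<lambda>\<mu>. integral\<^sup>L lborel (F1 a \<mu>) + integral\<^sup>L lborel (F2 a \<mu>)) has_real_derivative
      integral\<^sup>L lborel (F1' a \<mu>0) + integral\<^sup>L lborel (F2' a \<mu>0)) (at \<mu>0)"
    by (rule DERIV_add[OF d1 d2])
  then show ?thesis unfolding sumF'[OF a mu0] cstar_eq[abs_def] .
qed

lemma powr_test: "t > 0 \<Longrightarrow> ((\<lambda>x. t powr (x - 1)) has_real_derivative t powr (x - 1) * ln t) (at x)"
  by (auto intro!: derivative_eq_intros)

lemma powr_split:
  fixes t x a :: real
  assumes t: "t > 0" and x: "a / 2 < x" "x < 2 * a"
  shows "t powr (x - 1) \<le> t powr (a / 2 - 1) + t powr (2 * a - 1)"
proof (cases "t \<le> 1")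
  case True
  have "t powr (x - 1) \<le> t powr (a / 2 - 1)" by (rule powr_mono') (use x t True in auto)
  then show ?thesis by (simp add: add_increasing2)
next
  case False
  have "t powr (x - 1) \<le> t powr (2 * a - 1)" by (rule powr_mono) (use x False in auto)
  then show ?thesis by (simp add: add_increasing)
qed

lemma lnG_Digamma:
  assumes a: "a > 0"
  shows "integral\<^sup>L lborel (\<lambda>z. indicator {0<..} z * (ln z * gamma_density a z)) = Digamma a"
proof -
  define f where "f = (\<lambda>x t. indicator {0<..} t * (t powr (x - 1) * exp (- t)) :: real)"
  define f' where "f' = (\<lambda>x t. indicator {0<..} t * (ln t * t powr (x - 1) * exp (- t)) :: real)"
  define B where "B = (\<lambda>t. \<bar>indicator {0<..} t * (ln t * t powr (a / 2 - 1) * exp (- t))\<bar>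
     + \<bar>indicator {0<..} t * (ln t * t powr (2 * a - 1) * exp (- t))\<bar>)"
  have Bint: "integrable lborel B" unfolding B_def
    using ln_int[of "a / 2"] ln_int[of "2 * a"] a by (intro Bochner_Integration.integrable_add integrable_abs) simp_all
  have lr: "a / 2 < a" "a < 2 * a" using a by auto
  have d: "((\<lambda>x. integral\<^sup>L lborel (f x)) has_real_derivative integral\<^sup>L lborel (f' a)) (at a)"
  proof (rule DUI[OF lr _ _ _ Bint])
    show "((\<lambda>x. f x t) has_real_derivative f' x t) (at x)" for x t
    proof (cases "t > 0")
      case True
      then show ?thesis unfolding f_def f'_def by (auto intro!: derivative_eq_intros)
    next
      case False
      then show ?thesis unfolding f_def f'_def by simp
    qed
    show "integrable lborel (f x)" if "a / 2 < x" "x < 2 * a" for x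
      unfolding f_def using gamma_int(1)[of x] that a by simp
    show "f' a \<in> borel_measurable lborel" unfolding f'_def by measurable
    show "\<bar>f' x t\<bar> \<le> B t" if "a / 2 < x" "x < 2 * a" for x t
    proof (cases "t > 0")
      case True
      have "\<bar>ln t\<bar> * exp (- t) * t powr (x - 1) \<le> \<bar>ln t\<bar> * exp (- t) * (t powr (a / 2 - 1) + t powr (2 * a - 1))"
        by (rule mult_left_mono[OF powr_split[OF True that]]) simp
      then show ?thesis using True unfolding f'_def B_def by (simp add: abs_mult algebra_simps)
    next
      case False
      then show ?thesis unfolding f'_def B_def by simp
    qed
  qed
  have "(Gamma has_real_derivative integral\<^sup>L lborel (f' a)) (at a)"
  proof (rule has_field_derivative_transform_within_open[OF d, where S="{0<..}"])
    show "integral\<^sup>L lborel (f x) = Gamma x" if "x \<in> {0<..}" for x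
      unfolding f_def using gamma_int(2)[of x] that by simp
  qed (use a in auto)
  moreover have "(Gamma has_real_derivative Gamma a * Digamma a) (at a)"
    by (rule has_field_derivative_Gamma) (use a in \<open>auto\<close>)
  ultimately have eq: "integral\<^sup>L lborel (f' a) = Gamma a * Digamma a" by (rule DERIV_unique)
  have "(\<lambda>z. indicator {0<..} z * (ln z * gamma_density a z)) = (\<lambda>z. f' a z / Gamma a)"
    by (rule ext) (auto simp: f'_def gamma_density_def indicator_def)
  then have "integral\<^sup>L lborel (\<lambda>z. indicator {0<..} z * (ln z * gamma_density a z)) = integral\<^sup>L lborel (f' a) / Gamma a"
    by simp
  then show ?thesis using eq Gamma_real_pos[OF a] by simp
qed




lemma F_bound:
  assumes a: "a > 0"
  shows "\<bar>indicator {0<..} z * (ln z * gamma_CDF a x * gamma_density a z)\<bar>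
     \<le> \<bar>indicator {0<..} z * (ln z * gamma_density a z)\<bar>"
proof -
  have "\<bar>ln z\<bar> * gamma_CDF a x * gamma_density a z \<le> \<bar>ln z\<bar> * 1 * gamma_density a z"
    using gC_le1[OF a] gd_nonneg[OF a] by (intro mult_right_mono mult_left_mono) auto
  then show ?thesis using gC_nonneg[OF a, of x] gd_nonneg[OF a, of z] by (simp add: abs_mult mult_left_mono)
qed

lemma cstar_lim:
  assumes a: "a > 0"
  shows "(cstar a \<longlongrightarrow> Digamma a) at_top"
proof -
  let ?D = "\<lambda>z. indicator {0<..} z * (ln z * gamma_density a z)"
  have Dint: "integrable lborel (\<lambda>z. \<bar>?D z\<bar>)"
  proof -
    have "integrable lborel (\<lambda>z. indicator {0<..} z * (ln z * z powr (a - 1) * exp (- z)) / Gamma a)"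
      using ln_int[OF a] by simp
    also have "(\<lambda>z. indicator {0<..} z * (ln z * z powr (a - 1) * exp (- z)) / Gamma a) = ?D"
      by (rule ext) (auto simp: gamma_density_def indicator_def)
    finally show ?thesis by (rule integrable_abs)
  qed
  have l1: "((\<lambda>\<mu>. integral\<^sup>L lborel (F1 a \<mu>)) \<longlongrightarrow> integral\<^sup>L lborel (\<lambda>z::real. 0::real)) at_top"
  proof (rule integral_dominated_convergence_at_top[OF _ F_meas(1)[OF a] Dint])
    show "(\<lambda>z::real. 0::real) \<in> borel_measurable lborel" by simp
    show "AE z in lborel. ((\<lambda>\<mu>. F1 a \<mu> z) \<longlongrightarrow> 0) at_top"
    proof (rule AE_I2)
      fix z :: real
      show "((\<lambda>\<mu>. F1 a \<mu> z) \<longlongrightarrow> 0) at_top"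
      proof (cases "z > 0")
        case True
        have "filterlim (\<lambda>\<mu>. z / \<mu>) (at_right 0) at_top"
        proof (subst filterlim_at, intro conjI)
          show "\<forall>\<^sub>F \<mu> in at_top. z / \<mu> \<in> {0<..} \<and> z / \<mu> \<noteq> 0"
            using eventually_gt_at_top[of 0] by eventually_elim (use True in auto)
          show "((\<lambda>\<mu>. z / \<mu>) \<longlongrightarrow> 0) at_top"
            by (rule tendsto_divide_0[OF tendsto_const filterlim_at_top_imp_at_infinity[OF filterlim_ident]])
        qed
        then have "((\<lambda>\<mu>. gamma_CDF a (z / \<mu>)) \<longlongrightarrow> 0) at_top"
          by (rule filterlim_compose[OF gC_zero[OF a]])
        then have "((\<lambda>\<mu>. indicator {0<..} z * (ln z * gamma_CDF a (z / \<mu>) * gamma_density a z)) \<longlongrightarrow>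
            indicator {0<..} z * (ln z * 0 * gamma_density a z)) at_top"
          by (intro tendsto_intros)
        then show ?thesis by (simp add: F1_def[abs_def])
      qed (simp add: F1_def)
    qed
    show "\<forall>\<^sub>F \<mu> in at_top. AE z in lborel. norm (F1 a \<mu> z) \<le> \<bar>?D z\<bar>"
      using F_bound[OF a] by (simp add: F1_def)
  qed
  have l2: "((\<lambda>\<mu>. integral\<^sup>L lborel (F2 a \<mu>)) \<longlongrightarrow> integral\<^sup>L lborel ?D) at_top"
  proof (rule integral_dominated_convergence_at_top[OF _ F_meas(2)[OF a] Dint])
    show "?D \<in> borel_measurable lborel" by measurable
    show "AE z in lborel. ((\<lambda>\<mu>. F2 a \<mu> z) \<longlongrightarrow> ?D z) at_top"
    proof (rule AE_I2)
      fix z :: real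
      show "((\<lambda>\<mu>. F2 a \<mu> z) \<longlongrightarrow> ?D z) at_top"
      proof (cases "z > 0")
        case True
        have "filterlim (\<lambda>\<mu>. z * \<mu>) at_top at_top"
          by (rule filterlim_tendsto_pos_mult_at_top[OF tendsto_const True filterlim_ident])
        then have "filterlim (\<lambda>\<mu>. \<mu> * z) at_top at_top" by (simp add: mult.commute)
        then have "((\<lambda>\<mu>. gamma_CDF a (\<mu> * z)) \<longlongrightarrow> 1) at_top"
          by (rule filterlim_compose[OF gC_top[OF a]])
        then have "((\<lambda>\<mu>. indicator {0<..} z * (ln z * gamma_CDF a (\<mu> * z) * gamma_density a z)) \<longlongrightarrow>
            indicator {0<..} z * (ln z * 1 * gamma_density a z)) at_top"
          by (intro tendsto_intros)
        then show ?thesis by (simp add: F2_def[abs_def])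
      qed (simp add: F2_def)
    qed
    show "\<forall>\<^sub>F \<mu> in at_top. AE z in lborel. norm (F2 a \<mu> z) \<le> \<bar>?D z\<bar>"
      using F_bound[OF a] by (simp add: F2_def)
  qed
  have "((\<lambda>\<mu>. integral\<^sup>L lborel (F1 a \<mu>) + integral\<^sup>L lborel (F2 a \<mu>)) \<longlongrightarrow> 0 + integral\<^sup>L lborel ?D) at_top"
    using tendsto_add[OF l1 l2] by simp
  then show ?thesis unfolding cstar_eq[abs_def] lnG_Digamma[OF a] by simp
qed




theorem mainTheorem4:
  fixes \<alpha> :: real
  assumes "\<alpha> > 0"
  shows "(\<forall>\<mu>\<ge>1. (cstar \<alpha> has_real_derivative
            (- (Gamma (2 * \<alpha>) * \<mu> powr (\<alpha> - 1))
               / (Gamma \<alpha> ^ 2 * (1 + \<mu>) powr (2 * \<alpha>)) * ln \<mu>))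
            (at \<mu> within {1..}))
      \<and> (\<forall>\<mu>\<ge>1. - (Gamma (2 * \<alpha>) * \<mu> powr (\<alpha> - 1))
               / (Gamma \<alpha> ^ 2 * (1 + \<mu>) powr (2 * \<alpha>)) * ln \<mu> \<le> 0)
      \<and> (INF \<mu>\<in>{1..}. cstar \<alpha> \<mu>) = Digamma \<alpha>
      \<and> (SUP \<mu>\<in>{1..}. cstar \<alpha> \<mu>) = cstar \<alpha> 1
      \<and> cstar \<alpha> 1 = 2 * (LINT z:{0<..}|lborel. ln z * gamma_CDF \<alpha> z * gamma_density \<alpha> z)"
proof -
  have a: "\<alpha> > 0" by fact
  define h where "h = (\<lambda>\<mu>::real. - (Gamma (2 * \<alpha>) * \<mu> powr (\<alpha> - 1))
               / (Gamma \<alpha> ^ 2 * (1 + \<mu>) powr (2 * \<alpha>)) * ln \<mu>)"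
  have der: "(cstar \<alpha> has_real_derivative h \<mu>) (at \<mu>)" if "\<mu> > 0" for \<mu>
    unfolding h_def by (rule cstar_deriv[OF a that])
  have nonpos: "h \<mu> \<le> 0" if "\<mu> \<ge> 1" for \<mu>
  proof -
    have "Gamma (2 * \<alpha>) * \<mu> powr (\<alpha> - 1) / (Gamma \<alpha> ^ 2 * (1 + \<mu>) powr (2 * \<alpha>)) \<ge> 0"
    proof -
      have g1: "Gamma \<alpha> ^ 2 > 0" using Gamma_real_pos[OF a] by simp
      have g2: "Gamma (2 * \<alpha>) > 0" using a by simp
      have "(1 + \<mu>) powr (2 * \<alpha>) > 0" using that by simp
      then show ?thesis using g1 g2 by (intro divide_nonneg_pos mult_nonneg_nonneg mult_pos_pos) auto
    qed
    moreover have "ln \<mu> \<ge> 0" using that by simp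
    ultimately have "Gamma (2 * \<alpha>) * \<mu> powr (\<alpha> - 1) / (Gamma \<alpha> ^ 2 * (1 + \<mu>) powr (2 * \<alpha>)) * ln \<mu> \<ge> 0"
      by (rule mult_nonneg_nonneg)
    then show ?thesis unfolding h_def minus_divide_left[symmetric] mult_minus_left by linarith
  qed
  have dec: "cstar \<alpha> y \<le> cstar \<alpha> x" if "1 \<le> x" "x \<le> y" for x y
  proof (rule DERIV_nonpos_imp_decreasing_open[OF that(2)])
    show "\<exists>d. (cstar \<alpha> has_real_derivative d) (at t) \<and> d \<le> 0" if "x < t" "t < y" for t
      using der[of t] nonpos[of t] that \<open>1 \<le> x\<close> by auto
    show "continuous_on {x..y} (cstar \<alpha>)"
    proof (rule continuous_at_imp_continuous_on, rule ballI)
      fix t assume "t \<in> {x..y}"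
      then have "t > 0" using that by auto
      then show "isCont (cstar \<alpha>) t" by (rule DERIV_isCont[OF der])
    qed
  qed
  have lim: "(cstar \<alpha> \<longlongrightarrow> Digamma \<alpha>) at_top" by (rule cstar_lim[OF a])
  have lower: "Digamma \<alpha> \<le> cstar \<alpha> \<mu>" if "\<mu> \<ge> 1" for \<mu>
  proof (rule tendsto_upperbound[OF lim])
    show "\<forall>\<^sub>F y in at_top. cstar \<alpha> y \<le> cstar \<alpha> \<mu>"
      using eventually_ge_at_top[of \<mu>] by eventually_elim (use dec that in auto)
  qed simp
  have bb: "bdd_below (cstar \<alpha> ` {1..})"
    by (rule bdd_belowI2[of _ "Digamma \<alpha>"]) (use lower in auto)
  have inf: "(INF \<mu>\<in>{1..}. cstar \<alpha> \<mu>) = Digamma \<alpha>"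
  proof (rule antisym)
    show "(INF \<mu>\<in>{1..}. cstar \<alpha> \<mu>) \<le> Digamma \<alpha>"
    proof (rule tendsto_lowerbound[OF lim])
      show "\<forall>\<^sub>F y in at_top. (INF \<mu>\<in>{1..}. cstar \<alpha> \<mu>) \<le> cstar \<alpha> y"
        using eventually_ge_at_top[of 1] by eventually_elim (use bb in \<open>auto intro: cINF_lower\<close>)
    qed simp
    show "Digamma \<alpha> \<le> (INF \<mu>\<in>{1..}. cstar \<alpha> \<mu>)"
      by (rule cINF_greatest) (use lower in auto)
  qed
  have ba: "bdd_above (cstar \<alpha> ` {1..})"
    by (rule bdd_aboveI2[of _ _ "cstar \<alpha> 1"]) (use dec in auto)
  have sup: "(SUP \<mu>\<in>{1..}. cstar \<alpha> \<mu>) = cstar \<alpha> 1"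
  proof (rule antisym)
    show "(SUP \<mu>\<in>{1..}. cstar \<alpha> \<mu>) \<le> cstar \<alpha> 1"
      by (rule cSUP_least) (use dec in auto)
    show "cstar \<alpha> 1 \<le> (SUP \<mu>\<in>{1..}. cstar \<alpha> \<mu>)"
      by (rule cSUP_upper[OF _ ba]) simp
  qed
  have c1: "cstar \<alpha> 1 = 2 * (LINT z:{0<..}|lborel. ln z * gamma_CDF \<alpha> z * gamma_density \<alpha> z)"
    by (simp only: cstar_def div_by_1 mult_1 mult_2)
  have dw: "\<forall>\<mu>\<ge>1. (cstar \<alpha> has_real_derivative h \<mu>) (at \<mu> within {1..})"
    using der by (auto intro: has_field_derivative_at_within)
  have nonpos': "\<forall>\<mu>\<ge>1. h \<mu> \<le> 0" using nonpos by blast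
  note dw2 = dw[unfolded h_def] and nonpos2 = nonpos'[unfolded h_def]
  show ?thesis using dw2 nonpos2 inf sup c1 by (intro conjI) assumption+
qed



end
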